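(* For all nonnegative integers $L,M$, \[ \sum_{j\in\mathbb{Z}}(-1)^j q^{\frac{1}{2}j(5j+1)}\mathcal{B}(L,M,2j+1,j) =\sum_{n\geq 0}q^{n^2}\begin{bmatrix}2L+M-n-1\\ 2L-1\end{bmatrix}\begin{bmatrix}L-1\\ n\end{bmatrix}. \]
   Context: $(x;q)_n=\prod_{i=0}^{n-1}(1-xq^i)$, $(q)_n=(q;q)_n$; $\begin{bmatrix}n\\ m\end{bmatrix}=\frac{(q)_n}{(q)_m(q)_{n-m}}$ if $m,n-m$ are nonnegative integers, $0$ otherwise. $\mathcal{B}(L,M,a,b)=\begin{bmatrix}L+M+a-b\\ L+a\end{bmatrix}\begin{bmatrix}L+M-a+b\\ L-a\end{bmatrix}$. *)

theory Defs
  imports "HOL-Computational_Algebra.Formal_Power_Series"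
begin

definition qpoch :: "rat fps \<Rightarrow> nat \<Rightarrow> rat fps" where
  "qpoch x n = (\<Prod>i<n. 1 - x * fps_X ^ i)"

definition qfac :: "nat \<Rightarrow> rat fps" where
  "qfac n = qpoch fps_X n"

definition qbinom :: "int \<Rightarrow> int \<Rightarrow> rat fps" where
  "qbinom n m = (if 0 \<le> m \<and> 0 \<le> n - m
      then qfac (nat n) / (qfac (nat m) * qfac (nat (n - m))) else 0)"

definition BB :: "int \<Rightarrow> int \<Rightarrow> int \<Rightarrow> int \<Rightarrow> rat fps" where
  "BB L M a b = qbinom (L + M + a - b) (L + a) * qbinom (L + M - a + b) (L - a)"

end

theory Submission imports Defs begin

abbreviation X :: "rat fps" where "X \<equiv> fps_X"

lemma qfac_0[simp]: "qfac 0 = 1" by (simp add: qfac_def qpoch_def)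
lemma qfac_Suc: "qfac (Suc n) = qfac n * (1 - X ^ Suc n)"
  by (simp add: qfac_def qpoch_def algebra_simps)

lemma one_minus_Xpow_nz: "(1 - X ^ Suc k) \<noteq> 0"
proof
  assume "1 - X ^ Suc k = 0"
  then have "fps_nth (1 - X ^ Suc k) 0 = 0" by simp
  then show False by simp
qed

lemma Xpow_ne1: "X ^ Suc k \<noteq> 1"
  using one_minus_Xpow_nz[of k] by simp

lemma qfac_nz: "qfac n \<noteq> 0"
proof (induction n)
  case 0 then show ?case by simp
next
  case (Suc n) then show ?case using one_minus_Xpow_nz[of n]
    by (simp only: qfac_Suc mult_eq_0_iff) blast
qed

fun gb :: "nat \<Rightarrow> nat \<Rightarrow> rat fps" where
  "gb n 0 = 1"
| "gb 0 (Suc k) = 0"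
| "gb (Suc n) (Suc k) = gb n k + X ^ Suc k * gb n (Suc k)"

lemma gb_gt: "n < k \<Longrightarrow> gb n k = 0"
proof (induction n arbitrary: k)
  case 0 then show ?case by (cases k) auto
next
  case (Suc n) then show ?case by (cases k) auto
qed

lemma gb_prod: "k \<le> n \<Longrightarrow> gb n k * (qfac k * qfac (n - k)) = qfac n"
proof (induction n arbitrary: k)
  case 0 then show ?case by simp
next
  case (Suc n k)
  show ?case
  proof (cases k)
    case 0 then show ?thesis by simp
  next
    case (Suc k')
    show ?thesis
    proof (cases "k' = n")
      case True
      then show ?thesis using Suc Suc.IH[of n] by (auto simp add: gb_gt qfac_Suc)
    next
      case False
      then have lt: "k' < n" using Suc Suc.prems by simp
      then obtain d where d: "n - k' = Suc d" by (metis Suc_diff_Suc zero_less_diff)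
      have nk: "n - Suc k' = d" using d by simp
      have e1: "gb n k' * (qfac k' * qfac (n - k')) = qfac n" using Suc.IH lt by simp
      have e2: "gb n (Suc k') * (qfac (Suc k') * qfac d) = qfac n" using Suc.IH[of "Suc k'"] lt nk by simp
      have xx: "X ^ Suc k' * X ^ Suc d = X ^ Suc n" using d lt
        by (metis add_Suc_right le_add_diff_inverse less_imp_le power_add add_Suc)
      have "gb (Suc n) k * (qfac k * qfac (Suc n - k))
          = (gb n k' + X ^ Suc k' * gb n (Suc k')) * (qfac (Suc k') * qfac (Suc d))"
        using Suc d by simp
      also have "\<dots> = (gb n k' * (qfac k' * qfac (Suc d))) * (1 - X ^ Suc k')
          + X ^ Suc k' * (gb n (Suc k') * (qfac (Suc k') * qfac d)) * (1 - X ^ Suc d)"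
        by (simp add: qfac_Suc algebra_simps)
      also have "\<dots> = qfac n * (1 - X ^ Suc k') + X ^ Suc k' * qfac n * (1 - X ^ Suc d)"
        using e1 e2 d by simp
      also have "\<dots> = qfac n * (1 - X ^ Suc k' * X ^ Suc d)" by (simp add: algebra_simps)
      also have "\<dots> = qfac (Suc n)" using xx by (simp add: qfac_Suc)
      finally show ?thesis .
    qed
  qed
qed

lemma qbinom_gb: "0 \<le> m \<Longrightarrow> m \<le> n \<Longrightarrow> qbinom n m = gb (nat n) (nat m)"
proof -
  assume a: "0 \<le> m" "m \<le> n"
  have D: "qfac (nat m) * qfac (nat (n - m)) \<noteq> 0" using qfac_nz by simp
  have "gb (nat n) (nat m) * (qfac (nat m) * qfac (nat n - nat m)) = qfac (nat n)"
    using a by (intro gb_prod) simp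
  moreover have "nat n - nat m = nat (n - m)" using a by simp
  ultimately have "gb (nat n) (nat m) * (qfac (nat m) * qfac (nat (n - m))) = qfac (nat n)" by simp
  then have "qfac (nat n) / (qfac (nat m) * qfac (nat (n - m))) = gb (nat n) (nat m)"
    using D by (metis nonzero_mult_div_cancel_right)
  then show ?thesis using a by (simp add: qbinom_def)
qed

definition qb2 :: "int \<Rightarrow> int \<Rightarrow> rat fps" where
  "qb2 P C = qbinom (P + C) P"

lemma qb2_eq: "qb2 P C = (if 0 \<le> P \<and> 0 \<le> C then gb (nat (P + C)) (nat P) else 0)"
  by (auto simp: qb2_def qbinom_gb) (auto simp: qbinom_def)

lemma gb_diag[simp]: "gb n n = 1"
  by (induction n) (auto simp: gb_gt)

lemma qb2_neg1[simp]: "P < 0 \<Longrightarrow> qb2 P C = 0" by (simp add: qb2_eq)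
lemma qb2_neg2[simp]: "C < 0 \<Longrightarrow> qb2 P C = 0" by (simp add: qb2_eq)
lemma qb2_00[simp]: "qb2 0 C = (if 0 \<le> C then 1 else 0)"
  by (simp add: qb2_eq) 
lemma qb2_0[simp]: "qb2 P 0 = (if 0 \<le> P then 1 else 0)"
  by (simp add: qb2_eq)

lemma qb2_sym: "qb2 P C = qb2 C P"
proof -
  have "qbinom (P + C) P = qbinom (C + P) C"
    unfolding qbinom_def by (simp add: add.commute mult.commute)
  then show ?thesis by (simp add: qb2_def)
qed


lemma qb2_pascal:
  assumes "\<not> (P = 0 \<and> C = 0)"
  shows "qb2 P C = qb2 (P - 1) C + X ^ nat P * qb2 P (C - 1)"
proof (cases "P > 0 \<and> C > 0")
  case True
  define a where "a = nat (P + C) - 1"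
  define b where "b = nat P - 1"
  have a: "nat (P + C) = Suc a" using True unfolding a_def by simp
  have b: "nat P = Suc b" using True unfolding b_def by simp
  have 1: "nat (P - 1 + C) = a" "nat (P - 1) = b" "nat (P + (C - 1)) = a" using a b by auto
  have "qb2 P C = gb (Suc a) (Suc b)" using True a b by (simp add: qb2_eq)
  also have "\<dots> = gb a b + X ^ Suc b * gb a (Suc b)" by simp
  also have "\<dots> = qb2 (P - 1) C + X ^ nat P * qb2 P (C - 1)"
    using True 1 b by (simp add: qb2_eq)
  finally show ?thesis .
next
  case False
  consider "P < 0" | "C < 0" | "P = 0" "C > 0" | "P > 0" "C = 0" using assms False by linarith
  then show ?thesis
  proof cases
    case 1 then show ?thesis by simp
  next
    case 2 then show ?thesis by simp
  next
    case 3 then show ?thesis by simp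
  next
    case 4 then show ?thesis by simp
  qed
qed

lemma qb2_pascal_top:
  assumes "\<not> (P = 0 \<and> C = 0)"
  shows "qb2 P C = X ^ nat C * qb2 (P - 1) C + qb2 P (C - 1)"
proof -
  have "qb2 C P = qb2 (C - 1) P + X ^ nat C * qb2 C (P - 1)" using qb2_pascal[of C P] assms by blast
  moreover have "qb2 C P = qb2 P C" "qb2 (C - 1) P = qb2 P (C - 1)" "qb2 C (P - 1) = qb2 (P - 1) C"
    using qb2_sym by auto
  ultimately show ?thesis by (simp add: algebra_simps)
qed

section \<open>Finitely supported sums over the integers\<close>

definition zsum :: "(int \<Rightarrow> rat fps) \<Rightarrow> rat fps" where
  "zsum f = sum f {j. f j \<noteq> 0}"

lemma fin_bounded: fixes a b :: int and f :: "int \<Rightarrow> rat fps" shows "(\<And>j. f j \<noteq> 0 \<Longrightarrow> a \<le> j \<and> j \<le> b) \<Longrightarrow> finite {j. f j \<noteq> (0::rat fps)}"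
  by (rule finite_subset[of _ "{a..b}"]) auto

lemma zsum_superset:
  assumes "finite S" "\<And>j. f j \<noteq> 0 \<Longrightarrow> j \<in> S"
  shows "zsum f = sum f S"
  unfolding zsum_def using assms by (intro sum.mono_neutral_left) auto

lemma zsum_add:
  assumes "finite {j. f j \<noteq> 0}" "finite {j. g j \<noteq> 0}"
  shows "zsum (\<lambda>j. f j + g j) = zsum f + zsum g"
proof -
  let ?S = "{j. f j \<noteq> 0} \<union> {j. g j \<noteq> 0}"
  have "zsum (\<lambda>j. f j + g j) = sum (\<lambda>j. f j + g j) ?S"
    using assms by (intro zsum_superset) auto
  moreover have "zsum f = sum f ?S" using assms by (intro zsum_superset) auto
  moreover have "zsum g = sum g ?S" using assms by (intro zsum_superset) auto
  ultimately show ?thesis by (simp add: sum.distrib)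
qed

lemma zsum_cmult: "zsum (\<lambda>j. c * f j) = c * zsum f"
proof (cases "c = 0")
  case True then show ?thesis by (simp add: zsum_def)
next
  case False
  then have "{j. c * f j \<noteq> 0} = {j. f j \<noteq> 0}" by auto
  then show ?thesis by (simp add: zsum_def sum_distrib_left)
qed

lemma zsum_reindex:
  assumes "bij g"
  shows "zsum (\<lambda>j. f (g j)) = zsum f"
proof -
  have inj: "inj_on g {j. f (g j) \<noteq> 0}" using assms by (metis bij_def inj_on_subset subset_UNIV)
  have img: "g ` {j. f (g j) \<noteq> 0} = {i. f i \<noteq> 0}"
  proof
    show "g ` {j. f (g j) \<noteq> 0} \<subseteq> {i. f i \<noteq> 0}" by auto
    show "{i. f i \<noteq> 0} \<subseteq> g ` {j. f (g j) \<noteq> 0}"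
    proof
      fix i assume "i \<in> {i. f i \<noteq> 0}"
      moreover obtain j where "i = g j" using assms by (metis bij_pointE)
      ultimately show "i \<in> g ` {j. f (g j) \<noteq> 0}" by auto
    qed
  qed
  show ?thesis unfolding zsum_def using sum.reindex[OF inj, of f] img by (simp add: comp_def)
qed

lemma bij_minus: "bij (\<lambda>j::int. k - j)"
  by (rule o_bij[where g="\<lambda>j. k - j"]) (auto simp: fun_eq_iff)

lemma bij_plus: "bij (\<lambda>j::int. j + k)"
  by (rule o_bij[where g="\<lambda>j. j - k"]) (auto simp: fun_eq_iff)

lemma double_zero_fps: "x + x = 0 \<Longrightarrow> x = (0::rat fps)"
proof -
  assume h: "x + x = 0"
  have "fps_nth x n = 0" for n
  proof -
    have "fps_nth (x + x) n = 0" using h by simp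
    then have "fps_nth x n + fps_nth x n = 0" by (simp only: fps_add_nth)
    then show ?thesis by linarith
  qed
  then show ?thesis by (simp add: fps_eq_iff)
qed

lemma zsum_antisym:
  assumes "\<And>j. f (k - j) = - f j"
  shows "zsum f = 0"
proof -
  have "zsum f = zsum (\<lambda>j. f (k - j))" using zsum_reindex[OF bij_minus, of f k] by simp
  also have "\<dots> = zsum (\<lambda>j. (-1) * f j)" using assms by simp
  also have "\<dots> = - zsum f" using zsum_cmult[of "-1" f] by simp
  finally have "zsum f + zsum f = 0" by (simp add: algebra_simps)
  then show ?thesis by (rule double_zero_fps)
qed

lemma zsum_single: "(\<And>j. j \<noteq> 0 \<Longrightarrow> f j = 0) \<Longrightarrow> zsum f = f 0"
proof -
  assume a: "\<And>j. j \<noteq> 0 \<Longrightarrow> f j = 0"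
  have "zsum f = sum f {0}" using a by (intro zsum_superset) auto
  then show ?thesis by simp
qed

lemma zsum_zero: "(\<And>j. f j = 0) \<Longrightarrow> zsum f = 0"
  by (simp add: zsum_def)

lemma zsum_lin:
  assumes "\<And>j. f j = g j + c * h j" "finite {j. g j \<noteq> 0}" "finite {j. h j \<noteq> 0}"
  shows "zsum f = zsum g + c * zsum h"
proof -
  have fin2: "finite {j. c * h j \<noteq> 0}" by (rule finite_subset[OF _ assms(3)]) auto
  have "zsum f = zsum (\<lambda>j. g j + c * h j)" using assms(1) by presburger
  also have "\<dots> = zsum g + zsum (\<lambda>j. c * h j)" using zsum_add[OF assms(2) fin2] .
  also have "\<dots> = zsum g + c * zsum h" by (simp add: zsum_cmult)
  finally show ?thesis .
qed

definition ex :: "int \<Rightarrow> int \<Rightarrow> nat" where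
  "ex s j = nat ((5*j^2 + (1+2*s)*j) div 2)"

lemma ex_nonneg:
  fixes s j :: int
  assumes "-2 \<le> s" "s \<le> 2"
  shows "0 \<le> 5*j^2 + (1+2*s)*j"
proof -
  have eq: "5*j^2 + (1+2*s)*j = j * (5*j + 1 + 2*s)" by (simp add: algebra_simps power2_eq_square)
  consider "j \<ge> 1" | "j = 0" | "j \<le> -1" by linarith
  then show ?thesis
  proof cases
    case 1 then have "0 \<le> 5*j+1+2*s" using assms by linarith
    with 1 show ?thesis unfolding eq by simp
  next
    case 2 then show ?thesis by simp
  next
    case 3 then have "5*j+1+2*s \<le> 0" using assms by linarith
    with 3 show ?thesis unfolding eq by (simp add: mult_nonpos_nonpos)
  qed
qed

lemma ex_even:
  fixes s j :: int
  shows "even (5*j^2 + (1+2*s)*j)"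
proof -
  have eq: "5*j^2 + (1+2*s)*j = j*(j+1) + 2*(2*j^2 + s*j)" by (simp add: algebra_simps power2_eq_square)
  have "even (j*(j+1))" by simp
  then show ?thesis unfolding eq by simp
qed

lemma ex_int:
  assumes "-2 \<le> s" "s \<le> 2"
  shows "2 * int (ex s j) = 5*j^2 + (1+2*s)*j"
proof -
  have "0 \<le> (5*j^2 + (1+2*s)*j) div 2" using ex_nonneg[OF assms, of j] by simp
  then have "int (ex s j) = (5*j^2 + (1+2*s)*j) div 2" by (simp add: ex_def)
  then show ?thesis using ex_even[of j s] by simp
qed

lemma ex_diff:
  assumes "-2 \<le> s" "s \<le> 2" "-2 \<le> t" "t \<le> 2"
  shows "int (ex t j) = int (ex s j) + (t - s) * j"
proof -
  have a: "2 * int (ex s j) = 5*j^2 + (1+2*s)*j" by (rule ex_int[OF assms(1,2)])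
  have b: "2 * int (ex t j) = 5*j^2 + (1+2*t)*j" by (rule ex_int[OF assms(3,4)])
  have "2 * int (ex t j) = 2 * (int (ex s j) + (t - s) * j)"
    using a b by (simp add: algebra_simps)
  then show ?thesis by simp
qed

lemma ex_refl: "ex s (- j) = ex (-1 - s) j"
  unfolding ex_def by (simp add: algebra_simps power2_eq_square)

lemma ex_inv2: "ex 2 (-1 - j) = ex 2 j"
  unfolding ex_def by (simp add: algebra_simps power2_eq_square)

lemma sign_eq: "((-1) ^ nat \<bar>j\<bar> :: rat fps) = (if even j then 1 else -1)"
proof -
  have "even (nat \<bar>j\<bar>) \<longleftrightarrow> even j" by (simp add: even_nat_iff)
  then show ?thesis by (simp add: minus_one_power_iff)
qed

lemma sign_flip: "((-1) ^ nat \<bar>-1 - j\<bar> :: rat fps) = - ((-1) ^ nat \<bar>j\<bar>)"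
  unfolding sign_eq by auto

section \<open>The fermionic side\<close>

definition wt :: "int \<Rightarrow> int \<Rightarrow> int \<Rightarrow> int \<Rightarrow> int \<Rightarrow> int \<Rightarrow> rat fps" where
  "wt P1 C1 P2 C2 s j = (-1) ^ nat \<bar>j\<bar> * X ^ ex s j * qb2 (P1 + 2*j) (C1 - j) * qb2 (P2 - 2*j) (C2 + j)"

definition W :: "int \<Rightarrow> int \<Rightarrow> int \<Rightarrow> int \<Rightarrow> int \<Rightarrow> rat fps" where
  "W P1 C1 P2 C2 s = zsum (wt P1 C1 P2 C2 s)"

lemma wt_fin: "finite {j. wt P1 C1 P2 C2 s j \<noteq> 0}"
proof (rule fin_bounded[where a="-C2" and b=C1])
  fix j assume "wt P1 C1 P2 C2 s j \<noteq> 0"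
  then have "qb2 (P1 + 2*j) (C1 - j) \<noteq> 0" "qb2 (P2 - 2*j) (C2 + j) \<noteq> 0" by (auto simp: wt_def)
  then have "\<not> C1 - j < 0" "\<not> C2 + j < 0" using qb2_neg2 by blast+
  then show "- C2 \<le> j \<and> j \<le> C1" by linarith
qed

lemma wt_PB1:
  assumes "0 \<le> P1" "P1 + 2*C1 \<noteq> 0" "-2 \<le> s" "s \<le> 0"
  shows "wt P1 C1 P2 C2 s j = wt (P1-1) C1 P2 C2 s j + X ^ nat P1 * wt P1 (C1-1) P2 C2 (s+2) j"
proof -
  define A where "A = P1 + 2*j"
  define Cc where "Cc = C1 - j"
  define sg where "sg = ((-1) ^ nat \<bar>j\<bar> :: rat fps)"
  define R where "R = qb2 (P2 - 2*j) (C2 + j)"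
  have nz: "\<not> (A = 0 \<and> Cc = 0)" using assms(2) by (auto simp: A_def Cc_def)
  have pas: "qb2 A Cc = qb2 (A-1) Cc + X ^ nat A * qb2 A (Cc - 1)" using qb2_pascal[OF nz] .
  have e1: "wt P1 C1 P2 C2 s j = sg * X ^ ex s j * qb2 A Cc * R" by (simp add: wt_def A_def Cc_def sg_def R_def)
  have e2: "wt (P1-1) C1 P2 C2 s j = sg * X ^ ex s j * qb2 (A-1) Cc * R"
    by (simp add: wt_def A_def Cc_def sg_def R_def algebra_simps)
  have e3: "wt P1 (C1-1) P2 C2 (s+2) j = sg * X ^ ex (s+2) j * qb2 A (Cc-1) * R"
    by (simp add: wt_def A_def Cc_def sg_def R_def algebra_simps)
  have key: "X ^ ex s j * (X ^ nat A * qb2 A (Cc-1)) = X ^ nat P1 * (X ^ ex (s+2) j * qb2 A (Cc-1))"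
  proof (cases "A < 0")
    case True then show ?thesis by simp
  next
    case False
    have h: "int (ex (s+2) j) = int (ex s j) + (s+2 - s) * j" using assms by (intro ex_diff) auto
    have h2: "int (nat A) = A" "int (nat P1) = P1" using False assms(1) by auto
    have "int (ex s j + nat A) = int (nat P1 + ex (s+2) j)"
      unfolding of_nat_add h h2 by (simp add: A_def algebra_simps)
    then have eq: "ex s j + nat A = nat P1 + ex (s+2) j" by (simp only: of_nat_eq_iff)
    have p: "X ^ ex s j * X ^ nat A = X ^ nat P1 * X ^ ex (s+2) j"
      unfolding power_add[symmetric] eq ..
    show ?thesis by (simp only: mult.assoc[symmetric] p)
  qed
  have "wt P1 C1 P2 C2 s j = sg * X ^ ex s j * (qb2 (A-1) Cc + X ^ nat A * qb2 A (Cc - 1)) * R"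
    using e1 pas by simp
  also have "\<dots> = sg * X ^ ex s j * qb2 (A-1) Cc * R + sg * (X ^ ex s j * (X ^ nat A * qb2 A (Cc-1))) * R"
    by (simp add: algebra_simps)
  also have "\<dots> = sg * X ^ ex s j * qb2 (A-1) Cc * R + sg * (X ^ nat P1 * (X ^ ex (s+2) j * qb2 A (Cc-1))) * R"
    by (simp only: key)
  also have "\<dots> = wt (P1-1) C1 P2 C2 s j + X ^ nat P1 * wt P1 (C1-1) P2 C2 (s+2) j"
    unfolding e2 e3 by (simp add: algebra_simps)
  finally show ?thesis .
qed

lemma W_PB1:
  assumes "0 \<le> P1" "P1 + 2*C1 \<noteq> 0" "-2 \<le> s" "s \<le> 0"
  shows "W P1 C1 P2 C2 s = W (P1-1) C1 P2 C2 s + X ^ nat P1 * W P1 (C1-1) P2 C2 (s+2)"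
  unfolding W_def by (rule zsum_lin[OF wt_PB1[OF assms] wt_fin wt_fin])

lemma wt_PB2:
  assumes "0 \<le> P2" "P2 + 2*C2 \<noteq> 0" "0 \<le> s" "s \<le> 2"
  shows "wt P1 C1 P2 C2 s j = wt P1 C1 (P2-1) C2 s j + X ^ nat P2 * wt P1 C1 P2 (C2-1) (s-2) j"
proof -
  define A where "A = P2 - 2*j"
  define Cc where "Cc = C2 + j"
  define sg where "sg = ((-1) ^ nat \<bar>j\<bar> :: rat fps)"
  define R where "R = qb2 (P1 + 2*j) (C1 - j)"
  have nz: "\<not> (A = 0 \<and> Cc = 0)" using assms(2) by (auto simp: A_def Cc_def)
  have pas: "qb2 A Cc = qb2 (A-1) Cc + X ^ nat A * qb2 A (Cc - 1)" using qb2_pascal[OF nz] .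
  have e1: "wt P1 C1 P2 C2 s j = sg * X ^ ex s j * R * qb2 A Cc" by (simp add: wt_def A_def Cc_def sg_def R_def)
  have e2: "wt P1 C1 (P2-1) C2 s j = sg * X ^ ex s j * R * qb2 (A-1) Cc"
    by (simp add: wt_def A_def Cc_def sg_def R_def algebra_simps)
  have e3: "wt P1 C1 P2 (C2-1) (s-2) j = sg * X ^ ex (s-2) j * R * qb2 A (Cc-1)"
    by (simp add: wt_def A_def Cc_def sg_def R_def algebra_simps)
  have key: "X ^ ex s j * (X ^ nat A * qb2 A (Cc-1)) = X ^ nat P2 * (X ^ ex (s-2) j * qb2 A (Cc-1))"
  proof (cases "A < 0")
    case True then show ?thesis by simp
  next
    case False
    have h: "int (ex (s-2) j) = int (ex s j) + (s-2 - s) * j" using assms by (intro ex_diff) auto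
    have h2: "int (nat A) = A" "int (nat P2) = P2" using False assms(1) by auto
    have "int (ex s j + nat A) = int (nat P2 + ex (s-2) j)"
      unfolding of_nat_add h h2 by (simp add: A_def algebra_simps)
    then have eq: "ex s j + nat A = nat P2 + ex (s-2) j" by (simp only: of_nat_eq_iff)
    have p: "X ^ ex s j * X ^ nat A = X ^ nat P2 * X ^ ex (s-2) j"
      unfolding power_add[symmetric] eq ..
    show ?thesis by (simp only: mult.assoc[symmetric] p)
  qed
  have "wt P1 C1 P2 C2 s j = sg * X ^ ex s j * R * (qb2 (A-1) Cc + X ^ nat A * qb2 A (Cc - 1))"
    using e1 pas by simp
  also have "\<dots> = sg * X ^ ex s j * R * qb2 (A-1) Cc + sg * R * (X ^ ex s j * (X ^ nat A * qb2 A (Cc-1)))"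
    by (simp add: algebra_simps)
  also have "\<dots> = sg * X ^ ex s j * R * qb2 (A-1) Cc + sg * R * (X ^ nat P2 * (X ^ ex (s-2) j * qb2 A (Cc-1)))"
    by (simp only: key)
  also have "\<dots> = wt P1 C1 (P2-1) C2 s j + X ^ nat P2 * wt P1 C1 P2 (C2-1) (s-2) j"
    unfolding e2 e3 by (simp add: algebra_simps)
  finally show ?thesis .
qed

lemma W_PB2:
  assumes "0 \<le> P2" "P2 + 2*C2 \<noteq> 0" "0 \<le> s" "s \<le> 2"
  shows "W P1 C1 P2 C2 s = W P1 C1 (P2-1) C2 s + X ^ nat P2 * W P1 C1 P2 (C2-1) (s-2)"
  unfolding W_def by (rule zsum_lin[OF wt_PB2[OF assms] wt_fin wt_fin])

lemma wt_PT1: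
  assumes "0 \<le> C1" "P1 + 2*C1 \<noteq> 0" "-1 \<le> s" "s \<le> 2"
  shows "wt P1 C1 P2 C2 s j = wt P1 (C1-1) P2 C2 s j + X ^ nat C1 * wt (P1-1) C1 P2 C2 (s-1) j"
proof -
  define A where "A = P1 + 2*j"
  define Cc where "Cc = C1 - j"
  define sg where "sg = ((-1) ^ nat \<bar>j\<bar> :: rat fps)"
  define R where "R = qb2 (P2 - 2*j) (C2 + j)"
  have nz: "\<not> (A = 0 \<and> Cc = 0)" using assms(2) by (auto simp: A_def Cc_def)
  have pas: "qb2 A Cc = X ^ nat Cc * qb2 (A-1) Cc + qb2 A (Cc - 1)" using qb2_pascal_top[OF nz] .
  have e1: "wt P1 C1 P2 C2 s j = sg * X ^ ex s j * qb2 A Cc * R" by (simp add: wt_def A_def Cc_def sg_def R_def)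
  have e2: "wt P1 (C1-1) P2 C2 s j = sg * X ^ ex s j * qb2 A (Cc-1) * R"
    by (simp add: wt_def A_def Cc_def sg_def R_def algebra_simps)
  have e3: "wt (P1-1) C1 P2 C2 (s-1) j = sg * X ^ ex (s-1) j * qb2 (A-1) Cc * R"
    by (simp add: wt_def A_def Cc_def sg_def R_def algebra_simps)
  have key: "X ^ ex s j * (X ^ nat Cc * qb2 (A-1) Cc) = X ^ nat C1 * (X ^ ex (s-1) j * qb2 (A-1) Cc)"
  proof (cases "Cc < 0")
    case True then show ?thesis by simp
  next
    case False
    have h: "int (ex (s-1) j) = int (ex s j) + (s-1 - s) * j" using assms by (intro ex_diff) auto
    have h2: "int (nat Cc) = Cc" "int (nat C1) = C1" using False assms(1) by auto
    have "int (ex s j + nat Cc) = int (nat C1 + ex (s-1) j)"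
      unfolding of_nat_add h h2 by (simp add: Cc_def algebra_simps)
    then have eq: "ex s j + nat Cc = nat C1 + ex (s-1) j" by (simp only: of_nat_eq_iff)
    have p: "X ^ ex s j * X ^ nat Cc = X ^ nat C1 * X ^ ex (s-1) j"
      unfolding power_add[symmetric] eq ..
    show ?thesis by (simp only: mult.assoc[symmetric] p)
  qed
  have "wt P1 C1 P2 C2 s j = sg * X ^ ex s j * (X ^ nat Cc * qb2 (A-1) Cc + qb2 A (Cc - 1)) * R"
    using e1 pas by simp
  also have "\<dots> = sg * X ^ ex s j * qb2 A (Cc-1) * R + sg * (X ^ ex s j * (X ^ nat Cc * qb2 (A-1) Cc)) * R"
    by (simp add: algebra_simps)
  also have "\<dots> = sg * X ^ ex s j * qb2 A (Cc-1) * R + sg * (X ^ nat C1 * (X ^ ex (s-1) j * qb2 (A-1) Cc)) * R"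
    by (simp only: key)
  also have "\<dots> = wt P1 (C1-1) P2 C2 s j + X ^ nat C1 * wt (P1-1) C1 P2 C2 (s-1) j"
    unfolding e2 e3 by (simp add: algebra_simps)
  finally show ?thesis .
qed

lemma W_PT1:
  assumes "0 \<le> C1" "P1 + 2*C1 \<noteq> 0" "-1 \<le> s" "s \<le> 2"
  shows "W P1 C1 P2 C2 s = W P1 (C1-1) P2 C2 s + X ^ nat C1 * W (P1-1) C1 P2 C2 (s-1)"
  unfolding W_def by (rule zsum_lin[OF wt_PT1[OF assms] wt_fin wt_fin])

lemma wt_PT2:
  assumes "0 \<le> C2" "P2 + 2*C2 \<noteq> 0" "-2 \<le> s" "s \<le> 1"
  shows "wt P1 C1 P2 C2 s j = wt P1 C1 P2 (C2-1) s j + X ^ nat C2 * wt P1 C1 (P2-1) C2 (s+1) j"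
proof -
  define A where "A = P2 - 2*j"
  define Cc where "Cc = C2 + j"
  define sg where "sg = ((-1) ^ nat \<bar>j\<bar> :: rat fps)"
  define R where "R = qb2 (P1 + 2*j) (C1 - j)"
  have nz: "\<not> (A = 0 \<and> Cc = 0)" using assms(2) by (auto simp: A_def Cc_def)
  have pas: "qb2 A Cc = X ^ nat Cc * qb2 (A-1) Cc + qb2 A (Cc - 1)" using qb2_pascal_top[OF nz] .
  have e1: "wt P1 C1 P2 C2 s j = sg * X ^ ex s j * R * qb2 A Cc" by (simp add: wt_def A_def Cc_def sg_def R_def)
  have e2: "wt P1 C1 P2 (C2-1) s j = sg * X ^ ex s j * R * qb2 A (Cc-1)"
    by (simp add: wt_def A_def Cc_def sg_def R_def algebra_simps)
  have e3: "wt P1 C1 (P2-1) C2 (s+1) j = sg * X ^ ex (s+1) j * R * qb2 (A-1) Cc"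
    by (simp add: wt_def A_def Cc_def sg_def R_def algebra_simps)
  have key: "X ^ ex s j * (X ^ nat Cc * qb2 (A-1) Cc) = X ^ nat C2 * (X ^ ex (s+1) j * qb2 (A-1) Cc)"
  proof (cases "Cc < 0")
    case True then show ?thesis by simp
  next
    case False
    have h: "int (ex (s+1) j) = int (ex s j) + (s+1 - s) * j" using assms by (intro ex_diff) auto
    have h2: "int (nat Cc) = Cc" "int (nat C2) = C2" using False assms(1) by auto
    have "int (ex s j + nat Cc) = int (nat C2 + ex (s+1) j)"
      unfolding of_nat_add h h2 by (simp add: Cc_def algebra_simps)
    then have eq: "ex s j + nat Cc = nat C2 + ex (s+1) j" by (simp only: of_nat_eq_iff)
    have p: "X ^ ex s j * X ^ nat Cc = X ^ nat C2 * X ^ ex (s+1) j"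
      unfolding power_add[symmetric] eq ..
    show ?thesis by (simp only: mult.assoc[symmetric] p)
  qed
  have "wt P1 C1 P2 C2 s j = sg * X ^ ex s j * R * (X ^ nat Cc * qb2 (A-1) Cc + qb2 A (Cc - 1))"
    using e1 pas by simp
  also have "\<dots> = sg * X ^ ex s j * R * qb2 A (Cc-1) + sg * R * (X ^ ex s j * (X ^ nat Cc * qb2 (A-1) Cc))"
    by (simp add: algebra_simps)
  also have "\<dots> = sg * X ^ ex s j * R * qb2 A (Cc-1) + sg * R * (X ^ nat C2 * (X ^ ex (s+1) j * qb2 (A-1) Cc))"
    by (simp only: key)
  also have "\<dots> = wt P1 C1 P2 (C2-1) s j + X ^ nat C2 * wt P1 C1 (P2-1) C2 (s+1) j"
    unfolding e2 e3 by (simp add: algebra_simps)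
  finally show ?thesis .
qed

lemma W_PT2:
  assumes "0 \<le> C2" "P2 + 2*C2 \<noteq> 0" "-2 \<le> s" "s \<le> 1"
  shows "W P1 C1 P2 C2 s = W P1 C1 P2 (C2-1) s + X ^ nat C2 * W P1 C1 (P2-1) C2 (s+1)"
  unfolding W_def by (rule zsum_lin[OF wt_PT2[OF assms] wt_fin wt_fin])

lemma W_refl: "W P1 C1 P2 C2 s = W P2 C2 P1 C1 (-1 - s)"
proof -
  have "W P1 C1 P2 C2 s = zsum (\<lambda>j. wt P1 C1 P2 C2 s (0 - j))"
    unfolding W_def using zsum_reindex[OF bij_minus, of "wt P1 C1 P2 C2 s" 0] by simp
  also have "(\<lambda>j. wt P1 C1 P2 C2 s (0 - j)) = wt P2 C2 P1 C1 (-1 - s)"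
  proof
    fix j
    have "ex s (- j) = ex (-1 - s) j" by (rule ex_refl)
    then show "wt P1 C1 P2 C2 s (0 - j) = wt P2 C2 P1 C1 (-1 - s) j"
      by (simp add: wt_def algebra_simps)
  qed
  finally show ?thesis by (simp add: W_def)
qed

lemma W_vanish: "W P C (P-2) (C+1) 2 = 0"
  unfolding W_def
proof (rule zsum_antisym[where k="-1"])
  fix j
  have "ex 2 (-1 - j) = ex 2 j" by (rule ex_inv2)
  then show "wt P C (P-2) (C+1) 2 (-1 - j) = - wt P C (P-2) (C+1) 2 j"
    by (simp add: wt_def sign_flip algebra_simps)
qed

section \<open>The bosonic side\<close>

definition gt :: "int \<Rightarrow> int \<Rightarrow> int \<Rightarrow> int \<Rightarrow> int \<Rightarrow> rat fps" where
  "gt A B M \<sigma> n = X ^ nat (n^2 + \<sigma>*n) * qb2 A (M - n) * qb2 n (B - n)"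

definition H :: "int \<Rightarrow> int \<Rightarrow> int \<Rightarrow> int \<Rightarrow> rat fps" where
  "H A B M \<sigma> = zsum (gt A B M \<sigma>)"

lemma gt_fin: "finite {n. gt A B M \<sigma> n \<noteq> 0}"
proof (rule fin_bounded[where a=0 and b=M])
  fix n assume "gt A B M \<sigma> n \<noteq> 0"
  then have "qb2 A (M - n) \<noteq> 0" "qb2 n (B - n) \<noteq> 0" by (auto simp: gt_def)
  then have "\<not> M - n < 0" "\<not> n < 0" using qb2_neg2 qb2_neg1 by blast+
  then show "0 \<le> n \<and> n \<le> M" by linarith
qed

lemma H_GB:
  assumes "A \<noteq> 0"
  shows "H A B M \<sigma> = H (A-1) B M \<sigma> + X ^ nat A * H A B (M-1) \<sigma>"
  unfolding H_def
proof (rule zsum_lin[OF _ gt_fin gt_fin])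
  fix n
  have nz: "\<not> (A = 0 \<and> M - n = 0)" using assms by simp
  have pas: "qb2 A (M - n) = qb2 (A-1) (M - n) + X ^ nat A * qb2 A (M - n - 1)" using qb2_pascal[OF nz] .
  have e: "M - 1 - n = M - n - 1" by simp
  show "gt A B M \<sigma> n = gt (A-1) B M \<sigma> n + X ^ nat A * gt A B (M-1) \<sigma> n"
    unfolding gt_def pas e by (simp add: algebra_simps)
qed

lemma H_GT:
  assumes "A \<noteq> 0" "1 \<le> \<sigma>" "0 \<le> M"
  shows "H A B M \<sigma> = H A B (M-1) \<sigma> + X ^ nat M * H (A-1) B M (\<sigma>-1)"
  unfolding H_def
proof (rule zsum_lin[OF _ gt_fin gt_fin])
  fix n
  have nz: "\<not> (A = 0 \<and> M - n = 0)" using assms by simp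
  have pas: "qb2 A (M - n) = X ^ nat (M - n) * qb2 (A-1) (M - n) + qb2 A (M - n - 1)"
    using qb2_pascal_top[OF nz] .
  have e: "M - 1 - n = M - n - 1" by simp
  have key: "X ^ nat (n^2 + \<sigma>*n) * (X ^ nat (M - n) * qb2 (A-1) (M - n) * qb2 n (B - n))
      = X ^ nat M * (X ^ nat (n^2 + (\<sigma>-1)*n) * qb2 (A-1) (M - n) * qb2 n (B - n))"
  proof (cases "n < 0 \<or> M - n < 0")
    case True then show ?thesis by auto
  next
    case False
    have a: "0 \<le> n^2 + (\<sigma>-1)*n" using False assms by simp
    have b: "0 \<le> n^2 + \<sigma>*n" using False assms by simp
    have "int (nat (n^2 + \<sigma>*n) + nat (M - n)) = int (nat M + nat (n^2 + (\<sigma>-1)*n))"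
      using a b False assms by (simp add: algebra_simps)
    then have eq: "nat (n^2 + \<sigma>*n) + nat (M - n) = nat M + nat (n^2 + (\<sigma>-1)*n)"
      by (simp only: of_nat_eq_iff)
    have p: "X ^ nat (n^2 + \<sigma>*n) * X ^ nat (M - n) = X ^ nat M * X ^ nat (n^2 + (\<sigma>-1)*n)"
      unfolding power_add[symmetric] eq ..
    show ?thesis by (simp only: mult.assoc[symmetric] p)
  qed
  have "gt A B M \<sigma> n = X ^ nat (n^2 + \<sigma>*n) * (X ^ nat (M - n) * qb2 (A-1) (M - n) * qb2 n (B - n))
      + X ^ nat (n^2 + \<sigma>*n) * qb2 A (M - n - 1) * qb2 n (B - n)"
    unfolding gt_def pas by (simp add: algebra_simps)
  also have "\<dots> = gt A B (M-1) \<sigma> n + X ^ nat M * gt (A-1) B M (\<sigma>-1) n"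
    unfolding key gt_def e by (simp add: algebra_simps)
  finally show "gt A B M \<sigma> n = gt A B (M-1) \<sigma> n + X ^ nat M * gt (A-1) B M (\<sigma>-1) n" .
qed

lemma H_GR2:
  assumes "B \<noteq> 0" "0 \<le> B"
  shows "H A B M 0 = H A (B-1) M 0 + X ^ nat B * H A (B-1) (M-1) 1"
proof -
  define u where "u n = X ^ nat (n^2) * qb2 A (M - n) * (X ^ nat (B - n) * qb2 (n-1) (B - n))" for n
  have u_fin: "finite {n. u n \<noteq> 0}"
  proof (rule fin_bounded[where a=1 and b=M])
    fix n assume "u n \<noteq> 0"
    then have "qb2 A (M - n) \<noteq> 0" "qb2 (n-1) (B - n) \<noteq> 0" by (auto simp: u_def)
    then have "\<not> M - n < 0" "\<not> n - 1 < 0" using qb2_neg2 qb2_neg1 by blast+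
    then show "1 \<le> n \<and> n \<le> M" by linarith
  qed
  have t: "gt A B M 0 n = gt A (B-1) M 0 n + 1 * u n" for n
  proof -
    have nz: "\<not> (n = 0 \<and> B - n = 0)" using assms by auto
    have pas: "qb2 n (B - n) = X ^ nat (B - n) * qb2 (n-1) (B - n) + qb2 n (B - n - 1)"
      using qb2_pascal_top[OF nz] .
    have e: "B - 1 - n = B - n - 1" by simp
    show ?thesis unfolding gt_def u_def pas e by (simp add: algebra_simps)
  qed
  have "H A B M 0 = H A (B-1) M 0 + 1 * zsum u"
    unfolding H_def by (rule zsum_lin[OF t gt_fin u_fin])
  also have "zsum u = zsum (\<lambda>m. u (m + 1))" using zsum_reindex[OF bij_plus, of u 1] by simp
  also have "(\<lambda>m. u (m + 1)) = (\<lambda>m. X ^ nat B * gt A (B-1) (M-1) 1 m)"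
  proof
    fix m
    show "u (m + 1) = X ^ nat B * gt A (B-1) (M-1) 1 m"
    proof (cases "m < 0 \<or> B - m - 1 < 0")
      case True
      then show ?thesis by (auto simp: u_def gt_def)
    next
      case False
      have "int (nat ((m+1)^2) + nat (B - (m+1))) = int (nat B + nat (m^2 + 1*m))"
        using False assms by (simp add: algebra_simps power2_eq_square)
      then have eq: "nat ((m+1)^2) + nat (B - (m+1)) = nat B + nat (m^2 + 1*m)"
        by (simp only: of_nat_eq_iff)
      have p: "X ^ nat ((m+1)^2) * X ^ nat (B - (m+1)) = X ^ nat B * X ^ nat (m^2 + 1*m)"
        unfolding power_add[symmetric] eq ..
      have e1: "M - (m + 1) = M - 1 - m" "B - (m + 1) = B - 1 - m" "m + 1 - 1 = m" by simp_all
      have "u (m + 1) = (X ^ nat ((m+1)^2) * X ^ nat (B - (m+1))) * qb2 A (M - (m+1)) * qb2 (m + 1 - 1) (B - (m+1))"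
        unfolding u_def by (simp add: algebra_simps)
      also have "\<dots> = X ^ nat B * gt A (B-1) (M-1) 1 m"
        unfolding p unfolding e1 gt_def by (simp add: algebra_simps)
      finally show ?thesis .
    qed
  qed
  also have "zsum (\<lambda>m. X ^ nat B * gt A (B-1) (M-1) 1 m) = X ^ nat B * H A (B-1) (M-1) 1"
    unfolding H_def by (rule zsum_cmult)
  finally show ?thesis by simp
qed

lemma W_M0: "W P1 0 P2 0 s = (if 0 \<le> P1 \<and> 0 \<le> P2 then 1 else 0)"
proof -
  have "W P1 0 P2 0 s = wt P1 0 P2 0 s 0"
    unfolding W_def
  proof (rule zsum_single)
    fix j :: int assume "j \<noteq> 0"
    then have "0 - j < 0 \<or> 0 + j < 0" by linarith
    then show "wt P1 0 P2 0 s j = 0" unfolding wt_def by auto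
  qed
  also have "\<dots> = (if 0 \<le> P1 \<and> 0 \<le> P2 then 1 else 0)" by (simp add: wt_def ex_def)
  finally show ?thesis .
qed

lemma W_L0a: "0 \<le> M \<Longrightarrow> W 0 M 0 M 0 = 1"
proof -
  assume M: "0 \<le> M"
  have "W 0 M 0 M 0 = wt 0 M 0 M 0 0"
    unfolding W_def
  proof (rule zsum_single)
    fix j :: int assume "j \<noteq> 0"
    then have "0 + 2*j < 0 \<or> 0 - 2*j < 0" by linarith
    then show "wt 0 M 0 M 0 j = 0" unfolding wt_def by auto
  qed
  also have "\<dots> = 1" using M by (simp add: wt_def ex_def)
  finally show ?thesis .
qed

lemma W_L0b: "W 0 M (-1) M s = 0"
  unfolding W_def
proof (rule zsum_zero)
  fix j :: int
  have "0 + 2*j < 0 \<or> -1 - 2*j < 0" by linarith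
  then show "wt 0 M (-1) M s j = 0" unfolding wt_def by auto
qed

lemma H_M0: "H A B 0 \<sigma> = (if 0 \<le> A \<and> 0 \<le> B then 1 else 0)"
proof -
  have "H A B 0 \<sigma> = gt A B 0 \<sigma> 0"
    unfolding H_def
  proof (rule zsum_single)
    fix n :: int assume "n \<noteq> 0"
    then have "0 - n < 0 \<or> n < 0" by linarith
    then show "gt A B 0 \<sigma> n = 0" unfolding gt_def by auto
  qed
  also have "\<dots> = (if 0 \<le> A \<and> 0 \<le> B then 1 else 0)" by (simp add: gt_def)
  finally show ?thesis .
qed

lemma H_L0a: "0 \<le> M \<Longrightarrow> H 0 0 M 0 = 1"
proof -
  assume M: "0 \<le> M"
  have "H 0 0 M 0 = gt 0 0 M 0 0"
    unfolding H_def
  proof (rule zsum_single)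
    fix n :: int assume "n \<noteq> 0"
    then have "0 - n < 0 \<or> n < 0" by linarith
    then show "gt 0 0 M 0 n = 0" unfolding gt_def by auto
  qed
  also have "\<dots> = 1" using M by (simp add: gt_def)
  finally show ?thesis .
qed

lemma H_L0b: "H (-1) B M \<sigma> = 0"
  unfolding H_def by (rule zsum_zero) (simp add: gt_def)

section \<open>The recursion system\<close>

definition aF :: "int \<Rightarrow> int \<Rightarrow> rat fps" where "aF L M = W L M L M 0"
definition bF :: "int \<Rightarrow> int \<Rightarrow> rat fps" where "bF L M = W L M (L-1) M 0"
definition cF :: "int \<Rightarrow> int \<Rightarrow> rat fps" where "cF L M = W L M (L-1) M 1"
definition aG :: "int \<Rightarrow> int \<Rightarrow> rat fps" where "aG L M = H (2*L) L M 0"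
definition bG :: "int \<Rightarrow> int \<Rightarrow> rat fps" where "bG L M = H (2*L-1) (L-1) M 0"
definition cG :: "int \<Rightarrow> int \<Rightarrow> rat fps" where "cG L M = H (2*L-1) (L-1) M 1"

lemma Xpow_nat_add: "0 \<le> a \<Longrightarrow> 0 \<le> b \<Longrightarrow> X ^ nat a * X ^ nat b = X ^ nat (a + b)"
  by (simp add: power_add[symmetric] nat_add_distrib)

lemma S1F:
  assumes "1 \<le> L" "1 \<le> M"
  shows "bF L M = aF (L-1) M + X ^ nat (2*L-1) * bF L (M-1)"
proof -
  have 1: "W L M (L-1) M 0 = W (L-1) M (L-1) M 0 + X ^ nat L * W L (M-1) (L-1) M (0+2)"
    using assms by (intro W_PB1) auto
  have 2: "W L (M-1) (L-1) M 2 = W L (M-1) (L-1-1) M 2 + X ^ nat (L-1) * W L (M-1) (L-1) (M-1) (2-2)"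
    using assms by (intro W_PB2) auto
  have 3: "W L (M-1) (L-1-1) M 2 = 0" using W_vanish[of L "M-1"] by simp
  have 4: "X ^ nat L * X ^ nat (L-1) = X ^ nat (2*L-1)" using assms by (simp add: Xpow_nat_add)
  show ?thesis unfolding bF_def aF_def using 1 2 3 4 by (simp add: algebra_simps)
qed

lemma S2F:
  assumes "1 \<le> L" "1 \<le> M"
  shows "aF L M = bF L M + X ^ nat L * cF L (M-1) + X ^ nat (2*L) * aF L (M-1)"
proof -
  have 1: "W L M L M 0 = W L M (L-1) M 0 + X ^ nat L * W L M L (M-1) (0-2)"
    using assms by (intro W_PB2) auto
  have 2: "W L M L (M-1) (-2) = W (L-1) M L (M-1) (-2) + X ^ nat L * W L (M-1) L (M-1) (-2+2)"
    using assms by (intro W_PB1) auto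
  have 3: "W (L-1) M L (M-1) (-2) = W L (M-1) (L-1) M 1" using W_refl[of "L-1" M L "M-1" "-2"] by simp
  have 4: "W L (M-1) (L-1) M 1 = W L (M-1) (L-1) (M-1) 1 + X ^ nat M * W L (M-1) (L-1-1) M (1+1)"
    using assms by (intro W_PT2) auto
  have 5: "W L (M-1) (L-1-1) M 2 = 0" using W_vanish[of L "M-1"] by simp
  have 6: "X ^ nat L * X ^ nat L = X ^ nat (2*L)" using assms by (simp add: Xpow_nat_add)
  show ?thesis unfolding bF_def aF_def cF_def using 1 2 3 4 5 6 by (simp add: algebra_simps)
qed

lemma S3F:
  assumes "1 \<le> L" "1 \<le> M"
  shows "cF L M = cF L (M-1) + X ^ nat M * aF (L-1) M"
proof -
  have 1: "W L M (L-1) M 1 = W L (M-1) (L-1) M 1 + X ^ nat M * W (L-1) M (L-1) M (1-1)"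
    using assms by (intro W_PT1) auto
  have 4: "W L (M-1) (L-1) M 1 = W L (M-1) (L-1) (M-1) 1 + X ^ nat M * W L (M-1) (L-1-1) M (1+1)"
    using assms by (intro W_PT2) auto
  have 5: "W L (M-1) (L-1-1) M 2 = 0" using W_vanish[of L "M-1"] by simp
  show ?thesis unfolding cF_def aF_def using 1 4 5 by simp
qed

lemma S1G:
  assumes "1 \<le> L" "1 \<le> M"
  shows "bG L M = aG (L-1) M + X ^ nat (2*L-1) * bG L (M-1)"
proof -
  have 1: "H (2*L-1) (L-1) M 0 = H (2*L-1-1) (L-1) M 0 + X ^ nat (2*L-1) * H (2*L-1) (L-1) (M-1) 0"
    using assms by (intro H_GB) auto
  have 2: "2*L-1-1 = 2*(L-1)" by simp
  show ?thesis unfolding bG_def aG_def using 1 2 by simp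
qed

lemma S2G:
  assumes "1 \<le> L" "1 \<le> M"
  shows "aG L M = bG L M + X ^ nat L * cG L (M-1) + X ^ nat (2*L) * aG L (M-1)"
proof -
  have 1: "H (2*L) L M 0 = H (2*L-1) L M 0 + X ^ nat (2*L) * H (2*L) L (M-1) 0"
    using assms by (intro H_GB) auto
  have 2: "H (2*L-1) L M 0 = H (2*L-1) (L-1) M 0 + X ^ nat L * H (2*L-1) (L-1) (M-1) 1"
    using assms by (intro H_GR2) auto
  show ?thesis unfolding bG_def aG_def cG_def using 1 2 by (simp add: algebra_simps)
qed

lemma S3G:
  assumes "1 \<le> L" "1 \<le> M"
  shows "cG L M = cG L (M-1) + X ^ nat M * aG (L-1) M"
proof -
  have 1: "H (2*L-1) (L-1) M 1 = H (2*L-1) (L-1) (M-1) 1 + X ^ nat M * H (2*L-1-1) (L-1) M (1-1)"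
    using assms by (intro H_GT) auto
  have 2: "2*L-1-1 = 2*(L-1)" by simp
  show ?thesis unfolding cG_def aG_def using 1 2 by simp
qed

lemma base_L0: "0 \<le> M \<Longrightarrow> aF 0 M = aG 0 M \<and> bF 0 M = bG 0 M \<and> cF 0 M = cG 0 M"
  by (simp add: aF_def aG_def bF_def bG_def cF_def cG_def W_L0a H_L0a W_L0b H_L0b)

lemma base_M0: "0 \<le> L \<Longrightarrow> aF L 0 = aG L 0 \<and> bF L 0 = bG L 0 \<and> cF L 0 = cG L 0"
  by (simp add: aF_def aG_def bF_def bG_def cF_def cG_def W_M0 H_M0)

lemma main_eq: "aF (int L) (int M) = aG (int L) (int M) \<and> bF (int L) (int M) = bG (int L) (int M)
   \<and> cF (int L) (int M) = cG (int L) (int M)"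
proof (induction L arbitrary: M)
  case 0 then show ?case using base_L0[of "int M"] by simp
next
  case (Suc L)
  note outer = Suc.IH
  show ?case
  proof (induction M)
    case 0 then show ?case using base_M0[of "int (Suc L)"] by simp
  next
    case (Suc M)
    have L1: "1 \<le> int (Suc L)" and M1: "1 \<le> int (Suc M)" by simp_all
    have pL: "int (Suc L) - 1 = int L" and pM: "int (Suc M) - 1 = int M" by simp_all
    have o: "aF (int L) (int (Suc M)) = aG (int L) (int (Suc M))" using outer[of "Suc M"] by simp
    have i: "aF (int (Suc L)) (int M) = aG (int (Suc L)) (int M)"
      "bF (int (Suc L)) (int M) = bG (int (Suc L)) (int M)"
      "cF (int (Suc L)) (int M) = cG (int (Suc L)) (int M)" using Suc.IH by simp_all
    have b: "bF (int (Suc L)) (int (Suc M)) = bG (int (Suc L)) (int (Suc M))"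
      using S1F[OF L1 M1] S1G[OF L1 M1] o i unfolding pL pM by simp
    have c: "cF (int (Suc L)) (int (Suc M)) = cG (int (Suc L)) (int (Suc M))"
      using S3F[OF L1 M1] S3G[OF L1 M1] o i unfolding pL pM by simp
    have a: "aF (int (Suc L)) (int (Suc M)) = aG (int (Suc L)) (int (Suc M))"
      using S2F[OF L1 M1] S2G[OF L1 M1] b i unfolding pL pM by simp
    show ?case using a b c by simp
  qed
qed

lemma lhs_conv:
  fixes L M :: nat
  shows "(\<Sum>j\<in>{j::int. BB (int L) (int M) (2*j+1) j \<noteq> 0}.
            (-1) ^ nat \<bar>j\<bar> * fps_X ^ nat (j * (5*j+1) div 2) * BB (int L) (int M) (2*j+1) j)
       = W (int L + 1) (int M) (int L - 1) (int M) 0"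
proof -
  have t: "(-1) ^ nat \<bar>j\<bar> * fps_X ^ nat (j * (5*j+1) div 2) * BB (int L) (int M) (2*j+1) j
      = wt (int L + 1) (int M) (int L - 1) (int M) 0 j" for j
  proof -
    have e: "ex 0 j = nat (j * (5*j+1) div 2)" unfolding ex_def by (simp add: algebra_simps power2_eq_square)
    have q1: "qbinom (int L + int M + (2*j+1) - j) (int L + (2*j+1)) = qb2 (int L + 1 + 2*j) (int M - j)"
      unfolding qb2_def by (simp add: algebra_simps)
    have q2: "qbinom (int L + int M - (2*j+1) + j) (int L - (2*j+1)) = qb2 (int L - 1 - 2*j) (int M + j)"
      unfolding qb2_def by (simp add: algebra_simps)
    show ?thesis unfolding wt_def BB_def e q1 q2 by (simp add: algebra_simps)
  qed
  have pf: "((-1) ^ nat \<bar>j\<bar> * fps_X ^ nat (j * (5*j+1) div 2) :: rat fps) \<noteq> 0" for j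
    by simp
  have set: "{j::int. BB (int L) (int M) (2*j+1) j \<noteq> 0} = {j. wt (int L + 1) (int M) (int L - 1) (int M) 0 j \<noteq> 0}"
    using t pf by (auto simp flip: t)
  show ?thesis unfolding W_def zsum_def set using t by simp
qed

lemma rhs_conv:
  fixes L M :: nat
  shows "(\<Sum>n\<in>{n::nat. qbinom (2*int L + int M - int n - 1) (2*int L - 1) * qbinom (int L - 1) (int n) \<noteq> 0}.
            fps_X ^ (n^2) * qbinom (2*int L + int M - int n - 1) (2*int L - 1) * qbinom (int L - 1) (int n))
       = H (2 * int L - 1) (int L - 1) (int M) 0"
proof -
  define g where "g = gt (2 * int L - 1) (int L - 1) (int M) 0"
  have t: "g (int n) = fps_X ^ (n^2) * qbinom (2*int L + int M - int n - 1) (2*int L - 1) * qbinom (int L - 1) (int n)" for n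
  proof -
    have q1: "qb2 (2 * int L - 1) (int M - int n) = qbinom (2*int L + int M - int n - 1) (2*int L - 1)"
      unfolding qb2_def by (simp add: algebra_simps)
    have q2: "qb2 (int n) (int L - 1 - int n) = qbinom (int L - 1) (int n)"
      unfolding qb2_def by (simp add: algebra_simps)
    have e: "nat ((int n)^2 + 0 * int n) = n^2" by (simp add: nat_power_eq)
    show ?thesis unfolding g_def gt_def q1 q2 e ..
  qed
  have neg: "i < 0 \<Longrightarrow> g i = 0" for i by (simp add: g_def gt_def)
  have pf: "(fps_X ^ (n^2) :: rat fps) \<noteq> 0" for n by simp
  have set: "{i. g i \<noteq> 0} = int ` {n::nat. qbinom (2*int L + int M - int n - 1) (2*int L - 1) * qbinom (int L - 1) (int n) \<noteq> 0}"
  proof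
    show "{i. g i \<noteq> 0} \<subseteq> int ` {n. qbinom (2*int L + int M - int n - 1) (2*int L - 1) * qbinom (int L - 1) (int n) \<noteq> 0}"
    proof
      fix i assume "i \<in> {i. g i \<noteq> 0}"
      then have gi: "g i \<noteq> 0" by simp
      then have "\<not> i < 0" using neg by blast
      then obtain n where n: "i = int n" by (metis nonneg_int_cases not_less)
      then have "qbinom (2*int L + int M - int n - 1) (2*int L - 1) * qbinom (int L - 1) (int n) \<noteq> 0"
        using gi t[of n] by (auto simp: mult.assoc)
      then show "i \<in> int ` {n. qbinom (2*int L + int M - int n - 1) (2*int L - 1) * qbinom (int L - 1) (int n) \<noteq> 0}"
        using n by blast
    qed
  next
    show "int ` {n. qbinom (2*int L + int M - int n - 1) (2*int L - 1) * qbinom (int L - 1) (int n) \<noteq> 0} \<subseteq> {i. g i \<noteq> 0}"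
      using t pf by (auto simp: mult.assoc)
  qed
  have "H (2 * int L - 1) (int L - 1) (int M) 0 = sum g (int ` {n::nat. qbinom (2*int L + int M - int n - 1) (2*int L - 1) * qbinom (int L - 1) (int n) \<noteq> 0})"
    unfolding H_def zsum_def g_def[symmetric] set ..
  also have "\<dots> = (\<Sum>n\<in>{n::nat. qbinom (2*int L + int M - int n - 1) (2*int L - 1) * qbinom (int L - 1) (int n) \<noteq> 0}. g (int n))"
    by (subst sum.reindex) (auto simp: inj_on_def)
  finally show ?thesis using t by simp
qed

theorem lemma5p1:
  fixes L M :: nat
  shows "(\<Sum>j\<in>{j::int. BB (int L) (int M) (2*j+1) j \<noteq> 0}.
            (-1) ^ nat \<bar>j\<bar> * fps_X ^ nat (j * (5*j+1) div 2) * BB (int L) (int M) (2*j+1) j)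
       = (\<Sum>n\<in>{n::nat. qbinom (2*int L + int M - int n - 1) (2*int L - 1) * qbinom (int L - 1) (int n) \<noteq> 0}.
            fps_X ^ (n^2) * qbinom (2*int L + int M - int n - 1) (2*int L - 1) * qbinom (int L - 1) (int n))"
proof -
  have 1: "W (int L + 1) (int M) (int L - 1) (int M) 0
      = W (int L + 1 - 1) (int M) (int L - 1) (int M) 0 + X ^ nat (int L + 1) * W (int L + 1) (int M - 1) (int L - 1) (int M) (0+2)"
    by (intro W_PB1) auto
  have 2: "W (int L + 1) (int M - 1) (int L - 1) (int M) 2 = 0"
    using W_vanish[of "int L + 1" "int M - 1"] by simp
  have "W (int L + 1) (int M) (int L - 1) (int M) 0 = bF (int L) (int M)"
    using 1 2 by (simp add: bF_def)
  also have "\<dots> = bG (int L) (int M)" using main_eq by blast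
  also have "\<dots> = H (2 * int L - 1) (int L - 1) (int M) 0" by (simp add: bG_def)
  finally show ?thesis unfolding lhs_conv rhs_conv .
qed

end
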